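(* Under the hypotheses of Theorem 1 (the closed-loop scheme of the setting below, with (i) $\mathcal P_i(0)$ feasible for all $i$ and $S_i^\ast(0)\cap S_j^\ast(0)=\emptyset$ for all $i\neq j$, (ii) nominal completion: whenever contingency variables satisfying (C1)–(C8) and (L) of $\mathcal P_i(t+1)$ exist, nominal variables exist so that (N1)–(N3) also hold, and (iii) $\ell_i^{\mathrm c}(0,0)=0$), the closed-loop execution is collision-free: $\mathcal B_i(t)\cap\mathcal B_j(t)=\emptyset$ for all $i\neq j$ and all $t\in\mathbb Z_+$.
   Context: Setting. Agents $\mathcal I=\{1,\dots,M\}$. Agent $i$ has dynamics $x_i(t+1)=f_i(x_i(t),u_i(t))$, $x_i\in\mathbb R^{n_i}$, $u_i\in\mathbb R^{m_i}$, admissible sets $\mathcal X_i\subset\mathbb R^{n_i}$, $\mathcal U_i\subset\mathbb R^{m_i}$, position $p_i=C_ix_i\in\mathbb R^{n_p}$, body radius $r_i>0$, body $\mathcal B_i(t)=\mathbb B(p_i(t),r_i)$ (closed Euclidean ball), reference state $x_i^{\mathrm{ref}}$. A deterministic safe-set generator $\Gamma_i$ assigns to each $x\in\mathcal X_i$ a ball $\Gamma_i(x)=\mathbb B(c_i(x),R_i(x))$. The active safe set at time $t$ is $S_i^\ast(t)=\mathbb B(c_i(t),R_i(t))$. $h:\mathbb R^{n_p}\to\mathbb R$ is a continuous obstacle function. Horizons $N_{\mathrm n},N_{\mathrm c}\in\mathbb Z_{>0}$. Costs: nominal stage and terminal costs $\ell_i^{\mathrm n},V_i^{\mathrm n}$,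 nonnegative offset cost $V_i^{\mathrm c}$, nonnegative contingency stage cost $\ell_i^{\mathrm c}$, weight $\gamma>0$. Problem $\mathcal P_i(t)$ (given $x_i(t)$, $S_i^\ast(t)$ and a bound $\hat J_i^{\mathrm c}(t)\ge0$): decision variables $x^{\mathrm n}_{i,(k|t)}$ ($k=0..N_{\mathrm n}$), $u^{\mathrm n}_{i,(k|t)}$ ($k=0..N_{\mathrm n}-1$), $x^{\mathrm c}_{i,(k|t)}$ ($k=0..N_{\mathrm c}$), $u^{\mathrm c}_{i,(k|t)}$ ($k=0..N_{\mathrm c}-1$), $\bar x^{\mathrm c}_i(t),\bar u^{\mathrm c}_i(t)$; write $p^\bullet_{i,(k|t)}=C_ix^\bullet_{i,(k|t)}$. Minimize $J_i=\sum_{k=0}^{N_{\mathrm n}-1}\ell_i^{\mathrm n}(x^{\mathrm n}_{i,(k|t)},u^{\mathrm n}_{i,(k|t)})+V_i^{\mathrm n}(x^{\mathrm n}_{i,(N_{\mathrm n}|t)},x_i^{\mathrm{ref}})+\gamma V_i^{\mathrm c}(\bar x^{\mathrm c}_i(t),x_i^{\mathrm{ref}})$ subject to: (N1) $x^{\mathrm n}_{i,(0|t)}=x_i(t)$; (N2) $u^{\mathrm n}_{i,(0|t)}=u^{\mathrm c}_{i,(0|t)}$; (N3) $x^{\mathrm n}_{i,(k+1|t)}=f_i(x^{\mathrm n}_{i,(k|t)},u^{\mathrm n}_{i,(k|t)})$, $x^{\mathrm n}_{i,(k+1|t)}\in\mathcal X_i$, $u^{\mathrm n}_{i,(k|t)}\in\mathcal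 U_i$ for $k=0..N_{\mathrm n}-1$; (C1) $x^{\mathrm c}_{i,(0|t)}=x_i(t)$; (C2) $x^{\mathrm c}_{i,(k+1|t)}=f_i(x^{\mathrm c}_{i,(k|t)},u^{\mathrm c}_{i,(k|t)})$ for $k=0..N_{\mathrm c}-1$; (C3) $x^{\mathrm c}_{i,(k+1|t)}\in\mathcal X_i$, $u^{\mathrm c}_{i,(k|t)}\in\mathcal U_i$ for $k=0..N_{\mathrm c}-1$; (C4) $h(p^{\mathrm c}_{i,(k|t)})\ge0$ for $k=0..N_{\mathrm c}$; (C5) $x^{\mathrm c}_{i,(N_{\mathrm c}|t)}=\bar x^{\mathrm c}_i(t)$, $\bar x^{\mathrm c}_i(t)=f_i(\bar x^{\mathrm c}_i(t),\bar u^{\mathrm c}_i(t))$, $(\bar x^{\mathrm c}_i(t),\bar u^{\mathrm c}_i(t))\in\mathcal X_i\times\mathcal U_i$; (C6) $C_i\bar x^{\mathrm c}_i(t)\in S_i^\ast(t)$; (C7) $\|p^{\mathrm c}_{i,(k|t)}-c_i(t)\|\le R_i(t)-r_i$ for $k=0..N_{\mathrm c}$; (C8) $\|p^{\mathrm c}_{i,(l|t)}-c_i(x^{\mathrm c}_{i,(k|t)})\|\le R_i(x^{\mathrm c}_{i,(k|t)})-r_i$ for all $0\le k\le l\le N_{\mathrm c}$; (L) $J_i^{\mathrm c}(t)\le\hat J_i^{\mathrm c}(t)$, where $J_i^{\mathrm c}(t):=\sum_{k=0}^{N_{\mathrm c}-1}\ell_i^{\mathrm c}(x^{\mathrm c}_{i,(k|t)}-\bar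 x^{\mathrm c}_i(t),u^{\mathrm c}_{i,(k|t)}-\bar u^{\mathrm c}_i(t))+V_i^{\mathrm c}(\bar x^{\mathrm c}_i(t),x_i^{\mathrm{ref}})$. Closed loop: at each $t$ each agent solves $\mathcal P_i(t)$, a star denotes the optimal solution, $J_i^{\mathrm c,\ast}(t)$ is $J_i^{\mathrm c}$ evaluated at it, the input $u_i(t)=u^{\mathrm c,\ast}_{i,(0|t)}=u^{\mathrm n,\ast}_{i,(0|t)}$ is applied and the state evolves exactly by $x_i(t+1)=f_i(x_i(t),u_i(t))$. Bound update: $\hat J_i^{\mathrm c}(t+1):=J_i^{\mathrm c,\ast}(t)-\ell_i^{\mathrm c}(x_i(t)-\bar x^{\mathrm c,\ast}_i(t),u_i(t)-\bar u^{\mathrm c,\ast}_i(t))$. Freeze-or-shift (FoS) update: $\tilde S_i(t+1):=\Gamma_i(x_i(t+1))$; $\chi_i(t)=1$ if some $j\neq i$ has $\tilde S_i(t+1)\cap\tilde S_j(t+1)\neq\emptyset$ or $\tilde S_i(t+1)\cap S_j^\ast(t)\neq\emptyset$, else $\chi_i(t)=0$; $S_i^\ast(t+1)=S_i^\ast(t)$ if $\chi_i(t)=1$ and $S_i^\ast(t+1)=\tilde S_i(t+1)$ if $\chi_i(t)=0$. *)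

theory Defs
  imports "HOL-Analysis.Analysis"
begin

text \<open>Candidate solution of problem P_i(t): nominal states/inputs, contingency
  states/inputs, and the terminal (offset) equilibrium pair.
  Sequences are indexed by the prediction step k; values outside the horizons are irrelevant.\<close>
record ('x, 'u) sol =
  xn :: "nat \<Rightarrow> 'x"
  un :: "nat \<Rightarrow> 'u"
  xc :: "nat \<Rightarrow> 'x"
  uc :: "nat \<Rightarrow> 'u"
  xb :: 'x
  ub :: 'u

definition Jc_cost ::
  "nat \<Rightarrow> ('x::real_vector \<Rightarrow> 'u::real_vector \<Rightarrow> real) \<Rightarrow> ('x \<Rightarrow> 'x \<Rightarrow> real) \<Rightarrow> 'x
   \<Rightarrow> ('x, 'u) sol \<Rightarrow> real" where
  "Jc_cost Nc lc Vc xref s =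
     (\<Sum>k<Nc. lc (xc s k - xb s) (uc s k - ub s)) + Vc (xb s) xref"

definition J_cost ::
  "nat \<Rightarrow> ('x \<Rightarrow> 'u \<Rightarrow> real) \<Rightarrow> ('x \<Rightarrow> 'x \<Rightarrow> real) \<Rightarrow> real \<Rightarrow> ('x \<Rightarrow> 'x \<Rightarrow> real) \<Rightarrow> 'x
   \<Rightarrow> ('x, 'u) sol \<Rightarrow> real" where
  "J_cost Nn lnom Vn \<gamma> Vc xref s =
     (\<Sum>k<Nn. lnom (xn s k) (un s k)) + Vn (xn s Nn) xref + \<gamma> * Vc (xb s) xref"

definition nom_feas ::
  "('x \<Rightarrow> 'u \<Rightarrow> 'x) \<Rightarrow> 'x set \<Rightarrow> 'u set \<Rightarrow> nat \<Rightarrow> 'x \<Rightarrow> ('x, 'u) sol \<Rightarrow> bool" where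
  "nom_feas f X U Nn x0 s \<longleftrightarrow>
     xn s 0 = x0 \<and>
     un s 0 = uc s 0 \<and>
     (\<forall>k<Nn. xn s (k+1) = f (xn s k) (un s k) \<and> xn s (k+1) \<in> X \<and> un s k \<in> U)"

text \<open>Contingency constraints (C1)--(C8) and (L), given the current state x0,
  active safe set cball c R and bound Jh.
  cG, RG: centre and radius of the safe-set generator Gamma_i.\<close>
definition cont_feas ::
  "('x::real_vector \<Rightarrow> 'u::real_vector \<Rightarrow> 'x) \<Rightarrow> 'x set \<Rightarrow> 'u set \<Rightarrow> ('x \<Rightarrow> 'p::euclidean_space)
   \<Rightarrow> ('x \<Rightarrow> 'p) \<Rightarrow> ('x \<Rightarrow> real) \<Rightarrow> ('p \<Rightarrow> real) \<Rightarrow> real \<Rightarrow> nat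
   \<Rightarrow> ('x \<Rightarrow> 'u \<Rightarrow> real) \<Rightarrow> ('x \<Rightarrow> 'x \<Rightarrow> real) \<Rightarrow> 'x
   \<Rightarrow> 'x \<Rightarrow> 'p \<Rightarrow> real \<Rightarrow> real \<Rightarrow> ('x, 'u) sol \<Rightarrow> bool" where
  "cont_feas f X U C cG RG h r Nc lc Vc xref x0 c R Jh s \<longleftrightarrow>
     xc s 0 = x0 \<and>
     (\<forall>k<Nc. xc s (k+1) = f (xc s k) (uc s k)) \<and>
     (\<forall>k<Nc. xc s (k+1) \<in> X \<and> uc s k \<in> U) \<and>
     (\<forall>k\<le>Nc. h (C (xc s k)) \<ge> 0) \<and>
     (xc s Nc = xb s \<and> xb s = f (xb s) (ub s) \<and> xb s \<in> X \<and> ub s \<in> U) \<and>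
     C (xb s) \<in> cball c R \<and>
     (\<forall>k\<le>Nc. norm (C (xc s k) - c) \<le> R - r) \<and>
     (\<forall>k l. k \<le> l \<and> l \<le> Nc \<longrightarrow> norm (C (xc s l) - cG (xc s k)) \<le> RG (xc s k) - r) \<and>
     Jc_cost Nc lc Vc xref s \<le> Jh"

text \<open>Freeze-or-shift flag chi_i(t), for agents 1..M with states x j t and
  active safe sets cball (cS j t) (RS j t).\<close>
definition fos_chi ::
  "nat \<Rightarrow> (nat \<Rightarrow> 'x \<Rightarrow> 'p::euclidean_space) \<Rightarrow> (nat \<Rightarrow> 'x \<Rightarrow> real) \<Rightarrow> (nat \<Rightarrow> nat \<Rightarrow> 'x)
   \<Rightarrow> (nat \<Rightarrow> nat \<Rightarrow> 'p) \<Rightarrow> (nat \<Rightarrow> nat \<Rightarrow> real) \<Rightarrow> nat \<Rightarrow> nat \<Rightarrow> bool" where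
  "fos_chi M cG RG x cS RS i t \<longleftrightarrow>
     (\<exists>j\<in>{1..M}. j \<noteq> i \<and>
        (cball (cG i (x i (t+1))) (RG i (x i (t+1))) \<inter> cball (cG j (x j (t+1))) (RG j (x j (t+1))) \<noteq> {}
         \<or> cball (cG i (x i (t+1))) (RG i (x i (t+1))) \<inter> cball (cS j t) (RS j t) \<noteq> {}))"

end

theory Submission
  imports Defs
begin

theorem theorem2:
  fixes M :: nat
    and f :: "nat \<Rightarrow> 'x::real_vector \<Rightarrow> 'u::real_vector \<Rightarrow> 'x"
    and X :: "nat \<Rightarrow> 'x set" and U :: "nat \<Rightarrow> 'u set"
    and C :: "nat \<Rightarrow> 'x \<Rightarrow> 'p::euclidean_space"
    and r :: "nat \<Rightarrow> real"
    and xref :: "nat \<Rightarrow> 'x"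
    and cG :: "nat \<Rightarrow> 'x \<Rightarrow> 'p" and RG :: "nat \<Rightarrow> 'x \<Rightarrow> real"
    and h :: "'p \<Rightarrow> real"
    and Nn Nc :: nat
    and lnom lc :: "nat \<Rightarrow> 'x \<Rightarrow> 'u \<Rightarrow> real"
    and Vn Vc :: "nat \<Rightarrow> 'x \<Rightarrow> 'x \<Rightarrow> real"
    and \<gamma> :: real
    and x :: "nat \<Rightarrow> nat \<Rightarrow> 'x"
    and cS :: "nat \<Rightarrow> nat \<Rightarrow> 'p" and RS :: "nat \<Rightarrow> nat \<Rightarrow> real"
    and Jh :: "nat \<Rightarrow> nat \<Rightarrow> real"
    and sl :: "nat \<Rightarrow> nat \<Rightarrow> ('x, 'u) sol"
  defines "feas \<equiv> \<lambda>i t s. nom_feas (f i) (X i) (U i) Nn (x i t) s \<and>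
             cont_feas (f i) (X i) (U i) (C i) (cG i) (RG i) h (r i) Nc (lc i) (Vc i) (xref i)
               (x i t) (cS i t) (RS i t) (Jh i t) s"
  assumes lin: "\<forall>i\<in>{1..M}. linear (C i)"
    and r_pos: "\<forall>i\<in>{1..M}. r i > 0"
    and h_cont: "continuous_on UNIV h"
    and Nn_pos: "Nn > 0" and Nc_pos: "Nc > 0"
    and gamma_pos: "\<gamma> > 0"
    and Vc_nonneg: "\<forall>i\<in>{1..M}. \<forall>a b. Vc i a b \<ge> 0"
    and lc_nonneg: "\<forall>i\<in>{1..M}. \<forall>a b. lc i a b \<ge> 0"
    \<comment> \<open>closed loop: whenever P_i(t) is feasible, sl i t is an optimal solution of it\<close>
    and optimal: "\<forall>i\<in>{1..M}. \<forall>t. (\<exists>s. feas i t s) \<longrightarrow>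
        feas i t (sl i t) \<and>
        (\<forall>s. feas i t s \<longrightarrow> J_cost Nn (lnom i) (Vn i) \<gamma> (Vc i) (xref i) (sl i t)
                            \<le> J_cost Nn (lnom i) (Vn i) \<gamma> (Vc i) (xref i) s)"
    and dyn: "\<forall>i\<in>{1..M}. \<forall>t. x i (t+1) = f i (x i t) (uc (sl i t) 0)"
    and bound_upd: "\<forall>i\<in>{1..M}. \<forall>t. Jh i (t+1) =
        Jc_cost Nc (lc i) (Vc i) (xref i) (sl i t)
        - lc i (x i t - xb (sl i t)) (uc (sl i t) 0 - ub (sl i t))"
    and fos: "\<forall>i\<in>{1..M}. \<forall>t.
        (if fos_chi M cG RG x cS RS i t
         then cS i (t+1) = cS i t \<and> RS i (t+1) = RS i t
         else cS i (t+1) = cG i (x i (t+1)) \<and> RS i (t+1) = RG i (x i (t+1)))"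
    and Jh0: "\<forall>i\<in>{1..M}. Jh i 0 \<ge> 0"
    \<comment> \<open>(i) initial feasibility and disjoint initial safe sets\<close>
    and init_feas: "\<forall>i\<in>{1..M}. \<exists>s. feas i 0 s"
    and init_disj: "\<forall>i\<in>{1..M}. \<forall>j\<in>{1..M}. i \<noteq> j \<longrightarrow>
        cball (cS i 0) (RS i 0) \<inter> cball (cS j 0) (RS j 0) = {}"
    \<comment> \<open>(ii) nominal completion\<close>
    and nom_compl: "\<forall>i\<in>{1..M}. \<forall>t s.
        cont_feas (f i) (X i) (U i) (C i) (cG i) (RG i) h (r i) Nc (lc i) (Vc i) (xref i)
          (x i (t+1)) (cS i (t+1)) (RS i (t+1)) (Jh i (t+1)) s \<longrightarrow>
        (\<exists>xn' un'. nom_feas (f i) (X i) (U i) Nn (x i (t+1)) (s\<lparr>xn := xn', un := un'\<rparr>))"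
    \<comment> \<open>(iii)\<close>
    and lc_zero: "\<forall>i\<in>{1..M}. lc i 0 0 = 0"
  shows "\<forall>t. \<forall>i\<in>{1..M}. \<forall>j\<in>{1..M}. i \<noteq> j \<longrightarrow>
           cball (C i (x i t)) (r i) \<inter> cball (C j (x j t)) (r j) = {}"
proof -
  have feas_all: "\<forall>i\<in>{1..M}. \<forall>t. \<exists>s. feas i t s"
  proof (intro ballI allI)
    fix i t assume i: "i \<in> {1..M}"
    show "\<exists>s. feas i t s"
    proof (induction t)
      case 0
      then show ?case using init_feas i by blast
    next
      case (Suc t)
      define s where "s = sl i t"
      have F: "feas i t s" using Suc optimal i unfolding s_def by blast
      have c1: "xc s 0 = x i t"
        and c2: "\<forall>k<Nc. xc s (k+1) = f i (xc s k) (uc s k)"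
        and c3: "\<forall>k<Nc. xc s (k+1) \<in> X i \<and> uc s k \<in> U i"
        and c4: "\<forall>k\<le>Nc. h (C i (xc s k)) \<ge> 0"
        and c5: "xc s Nc = xb s" "xb s = f i (xb s) (ub s)" "xb s \<in> X i" "ub s \<in> U i"
        and c6: "C i (xb s) \<in> cball (cS i t) (RS i t)"
        and c7: "\<forall>k\<le>Nc. norm (C i (xc s k) - cS i t) \<le> RS i t - r i"
        and c8: "\<forall>k l. k \<le> l \<and> l \<le> Nc \<longrightarrow> norm (C i (xc s l) - cG i (xc s k)) \<le> RG i (xc s k) - r i"
        and cL: "Jc_cost Nc (lc i) (Vc i) (xref i) s \<le> Jh i t"
        using F unfolding feas_def cont_feas_def by auto
      have xt1: "x i (t+1) = xc s 1"
        using dyn i c1 c2 Nc_pos unfolding s_def by (metis One_nat_def add_0)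
      have rpos: "r i > 0" using r_pos i by blast
      obtain m where m: "Nc = Suc m" using Nc_pos gr0_implies_Suc by blast
      define xc' where "xc' = (\<lambda>k. xc s (min (k+1) Nc))"
      define uc' where "uc' = (\<lambda>k. if k+1 < Nc then uc s (k+1) else ub s)"
      define s' where "s' = s\<lparr>xc := xc', uc := uc'\<rparr>"
      have sxc: "xc s' = xc'" and suc: "uc s' = uc'" and sxb: "xb s' = xb s" and sub: "ub s' = ub s"
        unfolding s'_def by simp_all
      have safe: "norm (C i (xc s l) - cS i (t+1)) \<le> RS i (t+1) - r i" if "1 \<le> l" "l \<le> Nc" for l
      proof (cases "fos_chi M cG RG x cS RS i t")
        case True
        moreover have "(if fos_chi M cG RG x cS RS i t
         then cS i (t+1) = cS i t \<and> RS i (t+1) = RS i t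
         else cS i (t+1) = cG i (x i (t+1)) \<and> RS i (t+1) = RG i (x i (t+1)))" using fos i by blast
        ultimately show ?thesis using c7 that by simp
      next
        case False
        moreover have "(if fos_chi M cG RG x cS RS i t
         then cS i (t+1) = cS i t \<and> RS i (t+1) = RS i t
         else cS i (t+1) = cG i (x i (t+1)) \<and> RS i (t+1) = RG i (x i (t+1)))" using fos i by blast
        ultimately have "cS i (t+1) = cG i (xc s 1)" "RS i (t+1) = RG i (xc s 1)" using xt1 by simp_all
        then show ?thesis using c8 that by auto
      qed
      have safeb: "C i (xb s) \<in> cball (cS i (t+1)) (RS i (t+1))"
        using safe[of Nc] Nc_pos c5(1) rpos by (simp add: dist_norm norm_minus_commute)
      have J1: "Jc_cost Nc (lc i) (Vc i) (xref i) s' =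
          (\<Sum>k<m. lc i (xc s (Suc k) - xb s) (uc s (Suc k) - ub s)) + Vc i (xb s) (xref i)"
      proof -
        have "(\<Sum>k<Nc. lc i (xc' k - xb s) (uc' k - ub s)) =
              (\<Sum>k<m. lc i (xc' k - xb s) (uc' k - ub s)) + lc i (xc' m - xb s) (uc' m - ub s)"
          using m by simp
        also have "lc i (xc' m - xb s) (uc' m - ub s) = 0"
          using m c5(1) lc_zero i unfolding xc'_def uc'_def by simp
        also have "(\<Sum>k<m. lc i (xc' k - xb s) (uc' k - ub s)) =
             (\<Sum>k<m. lc i (xc s (Suc k) - xb s) (uc s (Suc k) - ub s))"
          by (rule sum.cong) (auto simp: xc'_def uc'_def m)
        finally show ?thesis unfolding Jc_cost_def sxc suc sxb sub by simp
      qed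
      have J2: "Jh i (t+1) = (\<Sum>k<m. lc i (xc s (Suc k) - xb s) (uc s (Suc k) - ub s)) + Vc i (xb s) (xref i)"
      proof -
        have "Jh i (t+1) = Jc_cost Nc (lc i) (Vc i) (xref i) s - lc i (x i t - xb s) (uc s 0 - ub s)"
          using bound_upd i unfolding s_def by blast
        then show ?thesis using c1 unfolding Jc_cost_def m sum.lessThan_Suc_shift by simp
      qed
      have CF: "cont_feas (f i) (X i) (U i) (C i) (cG i) (RG i) h (r i) Nc (lc i) (Vc i) (xref i)
          (x i (t+1)) (cS i (t+1)) (RS i (t+1)) (Jh i (t+1)) s'"
        unfolding cont_feas_def
      proof (intro conjI allI impI)
        show "xc s' 0 = x i (t+1)" using xt1 Nc_pos sxc xc'_def by simp
      next
        fix k assume k: "k < Nc"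
        show "xc s' (k+1) = f i (xc s' k) (uc s' k)"
        proof (cases "k+1 < Nc")
          case True then show ?thesis using c2 unfolding sxc suc xc'_def uc'_def by simp
        next
          case False then have "k + 1 = Nc" using k by simp
          then show ?thesis using c5 unfolding sxc suc xc'_def uc'_def by simp
        qed
      next
        fix k assume k: "k < Nc"
        have "xc s (min (k + 2) Nc) \<in> X i"
          proof (cases "k+2 \<le> Nc")
          case True
          then have "k+1 < Nc" by simp
          then have "xc s ((k+1)+1) \<in> X i" using c3 by blast
          then show ?thesis using True by (simp add: min_def)
        next
          case False
          then have "min (k+2) Nc = Nc" by simp
          then show ?thesis using c5 by simp
        qed
        then show "xc s' (k+1) \<in> X i" unfolding sxc xc'_def by (simp add: add.assoc)
        show "uc s' k \<in> U i" using c3 c5 unfolding suc uc'_def by auto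
      next
        fix k assume "k \<le> Nc"
        show "0 \<le> h (C i (xc s' k))" using c4 unfolding sxc xc'_def by simp
      next
        show "xc s' Nc = xb s'" using c5 unfolding sxc sxb xc'_def by simp
      next
        show "xb s' = f i (xb s') (ub s')" "xb s' \<in> X i" "ub s' \<in> U i" using c5 sxb sub by auto
      next
        show "C i (xb s') \<in> cball (cS i (t+1)) (RS i (t+1))" using safeb sxb by simp
      next
        fix k assume "k \<le> Nc"
        show "norm (C i (xc s' k) - cS i (t+1)) \<le> RS i (t+1) - r i"
          using safe[of "min (k+1) Nc"] Nc_pos unfolding sxc xc'_def by simp
      next
        fix k l assume kl: "k \<le> l \<and> l \<le> Nc"
        show "norm (C i (xc s' l) - cG i (xc s' k)) \<le> RG i (xc s' k) - r i"
          using c8[rule_format, of "min (k+1) Nc" "min (l+1) Nc"] kl unfolding sxc xc'_def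
          by (simp add: min_le_iff_disj)
      next
        show "Jc_cost Nc (lc i) (Vc i) (xref i) s' \<le> Jh i (t+1)" using J1 J2 by simp
      qed
      then obtain xn' un' where N: "nom_feas (f i) (X i) (U i) Nn (x i (t+1)) (s'\<lparr>xn := xn', un := un'\<rparr>)"
        using nom_compl i by blast
      have "cont_feas (f i) (X i) (U i) (C i) (cG i) (RG i) h (r i) Nc (lc i) (Vc i) (xref i)
          (x i (t+1)) (cS i (t+1)) (RS i (t+1)) (Jh i (t+1)) (s'\<lparr>xn := xn', un := un'\<rparr>)"
      proof -
        have e: "xc (s'\<lparr>xn := xn', un := un'\<rparr>) = xc s'" "uc (s'\<lparr>xn := xn', un := un'\<rparr>) = uc s'"
          "xb (s'\<lparr>xn := xn', un := un'\<rparr>) = xb s'" "ub (s'\<lparr>xn := xn', un := un'\<rparr>) = ub s'" by simp_all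
        show ?thesis using CF unfolding cont_feas_def Jc_cost_def e .
      qed
      then have "feas i (t+1) (s'\<lparr>xn := xn', un := un'\<rparr>)" using N unfolding feas_def by simp
      then show ?case by auto
    qed
  qed
  have disj: "\<forall>i\<in>{1..M}. \<forall>j\<in>{1..M}. i \<noteq> j \<longrightarrow>
        cball (cS i t) (RS i t) \<inter> cball (cS j t) (RS j t) = {}" for t
  proof (induction t)
    case 0 then show ?case using init_disj by blast
  next
    case (Suc t)
    show ?case
    proof (intro ballI impI)
      fix i j assume i: "i \<in> {1..M}" and j: "j \<in> {1..M}" and ij: "i \<noteq> j"
      have fi: "(if fos_chi M cG RG x cS RS i t
         then cS i (t+1) = cS i t \<and> RS i (t+1) = RS i t
         else cS i (t+1) = cG i (x i (t+1)) \<and> RS i (t+1) = RG i (x i (t+1)))" using fos i by blast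
      have fj: "(if fos_chi M cG RG x cS RS j t
         then cS j (t+1) = cS j t \<and> RS j (t+1) = RS j t
         else cS j (t+1) = cG j (x j (t+1)) \<and> RS j (t+1) = RG j (x j (t+1)))" using fos j by blast
      have IH: "cball (cS i t) (RS i t) \<inter> cball (cS j t) (RS j t) = {}" using Suc i j ij by blast
      show "cball (cS i (Suc t)) (RS i (Suc t)) \<inter> cball (cS j (Suc t)) (RS j (Suc t)) = {}"
      proof (cases "fos_chi M cG RG x cS RS i t")
        case ci: True
        show ?thesis
        proof (cases "fos_chi M cG RG x cS RS j t")
          case True then show ?thesis using ci fi fj IH by simp
        next
          case False
          then have "cball (cG j (x j (t+1))) (RG j (x j (t+1))) \<inter> cball (cS i t) (RS i t) = {}"
            using i ij unfolding fos_chi_def by blast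
          then show ?thesis using False ci fi fj by (simp add: Int_commute)
        qed
      next
        case ci: False
        then have A: "cball (cG i (x i (t+1))) (RG i (x i (t+1))) \<inter> cball (cS j t) (RS j t) = {}"
            and B: "cball (cG i (x i (t+1))) (RG i (x i (t+1))) \<inter> cball (cG j (x j (t+1))) (RG j (x j (t+1))) = {}"
          using j ij unfolding fos_chi_def by (metis (no_types, lifting))+
        show ?thesis
        proof (cases "fos_chi M cG RG x cS RS j t")
          case True then show ?thesis using ci fi fj A by simp
        next
          case False then show ?thesis using ci fi fj B by simp
        qed
      qed
    qed
  qed
  have body: "cball (C i (x i t)) (r i) \<subseteq> cball (cS i t) (RS i t)" if i: "i \<in> {1..M}" for i t
  proof -
    obtain s where "feas i t s" using feas_all i by blast
    then have N: "norm (C i (x i t) - cS i t) \<le> RS i t - r i"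
      unfolding feas_def cont_feas_def by auto
    show ?thesis
    proof
      fix y assume "y \<in> cball (C i (x i t)) (r i)"
      then have "norm (C i (x i t) - y) \<le> r i" by (simp add: dist_norm)
      moreover have "norm (cS i t - y) \<le> norm (cS i t - C i (x i t)) + norm (C i (x i t) - y)"
        by (rule norm_diff_triangle_le[where y="C i (x i t)"]) simp_all
      ultimately show "y \<in> cball (cS i t) (RS i t)" using N by (simp add: dist_norm norm_minus_commute)
    qed
  qed
  show ?thesis
  proof (intro allI ballI impI)
    fix t i j assume "i \<in> {1..M}" "j \<in> {1..M}" "i \<noteq> j"
    then show "cball (C i (x i t)) (r i) \<inter> cball (C j (x j t)) (r j) = {}"
      using body[of i t] body[of j t] disj[of t] by blast
  qed
qed

end
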